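(* Chekanov tori are not Hamiltonian stationary: if $\gamma\subset\mathbb{C}$ is a smooth simple closed curve contained in an open half-plane whose boundary line passes through the origin (so $\gamma$ avoids the origin), then the twisted torus $L_\gamma$ is not Hamiltonian stationary.
   Context: Identify $\mathbb{C}^2\cong\mathbb{R}^4$ with its Euclidean metric and standard complex structure $J$ (multiplication by $i$). For a smooth regular simple closed curve $\gamma:\mathbb{R}/2\pi\mathbb{Z}\to\mathbb{C}\setminus\{0\}$, the twisted torus is $L_\gamma=\left\{\tfrac{1}{\sqrt2}\left(\gamma(\beta)e^{i\alpha},\gamma(\beta)e^{-i\alpha}\right):\alpha,\beta\in[0,2\pi)\right\}\subset\mathbb{C}^2$; when $\gamma$ lies in an open half-plane (bounded by a line through $0$) it is called a Chekanov torus. Let $g$ be the induced metric and $H$ the mean curvature vector (trace of the second fundamental form). $L_\gamma$ is Hamiltonian stationary if it is a critical point of area under all variations with variation field $J\nabla h$, $h\in C^\infty(L_\gamma)$; equivalently (Oh) $\mathrm{div}_g(JH)=0$. *)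

theory Defs
  imports "HOL-Analysis.Analysis"
begin

fun Ck :: "nat \<Rightarrow> ('a::euclidean_space \<Rightarrow> 'b::real_normed_vector) \<Rightarrow> bool" where
  "Ck 0 f = continuous_on UNIV f"
| "Ck (Suc k) f = ((\<forall>x. f differentiable (at x)) \<and>
                    (\<forall>v. Ck k (\<lambda>x. frechet_derivative f (at x) v)))"

definition smooth_map :: "('a::euclidean_space \<Rightarrow> 'b::real_normed_vector) \<Rightarrow> bool" where
  "smooth_map f \<longleftrightarrow> (\<forall>k. Ck k f)"

definition smooth_regular_simple_closed_curve :: "(real \<Rightarrow> complex) \<Rightarrow> bool" where
  "smooth_regular_simple_closed_curve \<gamma> \<longleftrightarrow>
     (\<forall>t. \<gamma> (t + 2*pi) = \<gamma> t) \<and>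
     smooth_map \<gamma> \<and>
     (\<forall>t. vector_derivative \<gamma> (at t) \<noteq> 0) \<and>
     inj_on \<gamma> {0..<2*pi} \<and>
     (\<forall>t. \<gamma> t \<noteq> 0)"

definition in_open_half_plane :: "(real \<Rightarrow> complex) \<Rightarrow> bool" where
  "in_open_half_plane \<gamma> \<longleftrightarrow> (\<exists>u::complex. u \<noteq> 0 \<and> (\<forall>t. Re (\<gamma> t * cnj u) > 0))"

(* parametrisation (alpha,beta) \<mapsto> (1/sqrt 2)(gamma(beta) e^{i alpha}, gamma(beta) e^{-i alpha}) of L_gamma
   in C^2 = complex \<times> complex (Euclidean inner product of R^4) *)
definition twisted_torus :: "(real \<Rightarrow> complex) \<Rightarrow> real \<times> real \<Rightarrow> complex \<times> complex" where
  "twisted_torus \<gamma> p = scaleR (1 / sqrt 2) (\<gamma> (snd p) * cis (fst p), \<gamma> (snd p) * cis (- fst p))"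

definition cJ :: "complex \<times> complex \<Rightarrow> complex \<times> complex" where
  "cJ z = (\<i> * fst z, \<i> * snd z)"

definition pd1 :: "(real \<times> real \<Rightarrow> 'b::real_normed_vector) \<Rightarrow> real \<times> real \<Rightarrow> 'b" where
  "pd1 f p = frechet_derivative f (at p) (1, 0)"
definition pd2 :: "(real \<times> real \<Rightarrow> 'b::real_normed_vector) \<Rightarrow> real \<times> real \<Rightarrow> 'b" where
  "pd2 f p = frechet_derivative f (at p) (0, 1)"

(* coefficients of the induced metric g = E da^2 + 2 M da db + G db^2 *)
definition gE :: "(real \<times> real \<Rightarrow> complex \<times> complex) \<Rightarrow> real \<times> real \<Rightarrow> real" where
  "gE X p = pd1 X p \<bullet> pd1 X p"
definition gM :: "(real \<times> real \<Rightarrow> complex \<times> complex) \<Rightarrow> real \<times> real \<Rightarrow> real" where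
  "gM X p = pd1 X p \<bullet> pd2 X p"
definition gG :: "(real \<times> real \<Rightarrow> complex \<times> complex) \<Rightarrow> real \<times> real \<Rightarrow> real" where
  "gG X p = pd2 X p \<bullet> pd2 X p"

definition torus_area :: "(real \<times> real \<Rightarrow> complex \<times> complex) \<Rightarrow> real" where
  "torus_area X = integral (cbox (0, 0) (2*pi, 2*pi))
       (\<lambda>p. sqrt (gE X p * gG X p - (gM X p)\<^sup>2))"

(* the tangent vector dX(grad_g h) in C^2, grad_g the gradient w.r.t. the induced metric *)
definition grad_push :: "(real \<times> real \<Rightarrow> complex \<times> complex) \<Rightarrow> (real \<times> real \<Rightarrow> real)
                         \<Rightarrow> real \<times> real \<Rightarrow> complex \<times> complex" where
  "grad_push X h p =
     (let E = gE X p; M = gM X p; G = gG X p; D = E * G - M\<^sup>2;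
          ha = pd1 h p; hb = pd2 h p
      in ((G * ha - M * hb) / D) *\<^sub>R pd1 X p + ((E * hb - M * ha) / D) *\<^sub>R pd2 X p)"

definition periodic2 :: "(real \<times> real \<Rightarrow> 'b) \<Rightarrow> bool" where
  "periodic2 h \<longleftrightarrow> (\<forall>a b. h (a + 2*pi, b) = h (a, b) \<and> h (a, b + 2*pi) = h (a, b))"

(* Hamiltonian stationary: critical point of area under every variation whose
   variation field is J grad h, h smooth on the torus; the variation used is X + t J grad h *)
definition hamiltonian_stationary :: "(real \<times> real \<Rightarrow> complex \<times> complex) \<Rightarrow> bool" where
  "hamiltonian_stationary X \<longleftrightarrow>
     (\<forall>h :: real \<times> real \<Rightarrow> real. smooth_map h \<and> periodic2 h \<longrightarrow>
        ((\<lambda>t. torus_area (\<lambda>p. X p + t *\<^sub>R cJ (grad_push X h p))) has_real_derivative 0) (at 0))"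

end

theory Submission
  imports Defs
begin


fun C1D :: "nat \<Rightarrow> (real \<Rightarrow> 'a::real_normed_vector) \<Rightarrow> bool" where
  "C1D 0 f = continuous_on UNIV f"
| "C1D (Suc n) f = (\<exists>f'. (\<forall>x. (f has_vector_derivative f' x) (at x)) \<and> C1D n f')"

lemma C1D_cont: assumes "C1D n f" shows "continuous_on UNIV f"
proof (cases n)
  case 0
  then show ?thesis using assms by simp
next
  case (Suc m)
  then obtain f' where "\<forall>x. (f has_vector_derivative f' x) (at x)" using assms by auto
  then show ?thesis
    by (meson continuous_at_imp_continuous_on has_vector_derivative_continuous)
qed

lemma C1D_Suc_imp: "C1D (Suc n) f \<Longrightarrow> C1D n f"
proof (induction n arbitrary: f)
  case 0
  from C1D_cont[OF this] show ?case by simp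
next
  case (Suc n)
  then obtain f' where "\<forall>x. (f has_vector_derivative f' x) (at x)" "C1D (Suc n) f'" by auto
  then show ?case using Suc.IH by auto
qed

lemma C1D_le: "m \<le> n \<Longrightarrow> C1D n f \<Longrightarrow> C1D m f"
proof (induction n)
  case 0 then show ?case by simp
next
  case (Suc n)
  show ?case
  proof (cases "m = Suc n")
    case True then show ?thesis using Suc by simp
  next
    case False then show ?thesis using Suc C1D_Suc_imp[of n f] by simp
  qed
qed

lemma C1D_const: "C1D n (\<lambda>x. c)"
proof (induction n arbitrary: c)
  case 0 then show ?case by simp
next
  case (Suc n) then show ?case
    by (auto intro!: exI[of _ "\<lambda>x. 0"] derivative_eq_intros)
qed

lemma C1D_add: "C1D n f \<Longrightarrow> C1D n g \<Longrightarrow> C1D n (\<lambda>x. f x + g x)"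
proof (induction n arbitrary: f g)
  case 0 then show ?case by (auto intro: continuous_intros)
next
  case (Suc n)
  then obtain f' g' where "\<forall>x. (f has_vector_derivative f' x) (at x)" "C1D n f'"
     "\<forall>x. (g has_vector_derivative g' x) (at x)" "C1D n g'" by auto
  then show ?case using Suc.IH
    by (auto intro!: exI[of _ "\<lambda>x. f' x + g' x"] derivative_eq_intros)
qed

lemma C1D_mult:
  fixes f g :: "real \<Rightarrow> 'a::real_normed_algebra"
  shows "C1D n f \<Longrightarrow> C1D n g \<Longrightarrow> C1D n (\<lambda>x. f x * g x)"
proof (induction n arbitrary: f g)
  case 0 then show ?case by (auto intro: continuous_intros)
next
  case (Suc n)
  then obtain f' g' where f': "\<forall>x. (f has_vector_derivative f' x) (at x)" "C1D n f'"
     and g': "\<forall>x. (g has_vector_derivative g' x) (at x)" "C1D n g'" by auto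
  have "C1D n f" "C1D n g" using Suc.prems C1D_Suc_imp by auto
  then have "C1D n (\<lambda>x. f x * g' x + f' x * g x)"
    using Suc.IH f' g' by (intro C1D_add) auto
  moreover have "\<forall>x. ((\<lambda>x. f x * g x) has_vector_derivative (f x * g' x + f' x * g x)) (at x)"
    using f' g' by (auto intro: has_vector_derivative_mult)
  ultimately show ?case by auto
qed

lemma C1D_linear:
  assumes L: "bounded_linear L"
  shows "C1D n f \<Longrightarrow> C1D n (\<lambda>x. L (f x))"
proof (induction n arbitrary: f)
  case 0 then show ?case
    using L by (auto intro: continuous_on_compose2[of UNIV L] linear_continuous_on)
next
  case (Suc n)
  then obtain f' where f': "\<forall>x. (f has_vector_derivative f' x) (at x)" "C1D n f'" by auto
  have "\<forall>x. ((\<lambda>x. L (f x)) has_vector_derivative L (f' x)) (at x)"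
    using f' L by (auto intro: bounded_linear.has_vector_derivative)
  then show ?case using Suc.IH f' by auto
qed

lemma C1D_inverse:
  fixes f :: "real \<Rightarrow> 'a::real_normed_field"
  shows "(\<forall>x. f x \<noteq> 0) \<Longrightarrow> C1D n f \<Longrightarrow> C1D n (\<lambda>x. inverse (f x))"
proof (induction n arbitrary: f)
  case 0 then show ?case by (simp, intro continuous_intros) auto
next
  case (Suc n)
  note nz = Suc.prems(1)
  obtain f' where f': "\<forall>x. (f has_vector_derivative f' x) (at x)" "C1D n f'" using Suc.prems(2) by auto
  have "\<forall>x. ((\<lambda>x. inverse (f x)) has_vector_derivative (f' x * (- (inverse (f x) * inverse (f x))))) (at x)"
  proof
    fix x
    have "(inverse has_field_derivative - (inverse (f x) * inverse (f x))) (at (f x))"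
      using nz by (auto intro!: derivative_eq_intros simp: power2_eq_square)
    from field_vector_diff_chain_at[OF f'(1)[rule_format] this] show
      "((\<lambda>x. inverse (f x)) has_vector_derivative (f' x * (- (inverse (f x) * inverse (f x))))) (at x)"
      by (simp add: o_def)
  qed
  moreover have "C1D n (\<lambda>x. f' x * (- (inverse (f x) * inverse (f x))))"
  proof -
    have "C1D n (\<lambda>x. inverse (f x))" using Suc.IH Suc.prems C1D_Suc_imp nz by blast
    then have "C1D n (\<lambda>x. - (inverse (f x) * inverse (f x)))"
      using C1D_mult C1D_linear[of "\<lambda>x. - x"] bounded_linear_minus[OF bounded_linear_ident]
      by fastforce
    then show ?thesis using C1D_mult f' by blast
  qed
  ultimately show ?case by auto
qed

lemma Ck_imp_C1D:
  fixes f :: "real \<Rightarrow> 'b::real_normed_vector"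
  shows "Ck k f \<Longrightarrow> C1D k f"
proof (induction k arbitrary: f)
  case 0 then show ?case by simp
next
  case (Suc k)
  have d: "\<forall>x. f differentiable (at x)" and c: "Ck k (\<lambda>x. frechet_derivative f (at x) 1)"
    using Suc.prems by auto
  have "\<forall>x. frechet_derivative f (at x) 1 = vector_derivative f (at x)"
    using d by (simp add: frechet_derivative_eq_vector_derivative)
  then have "C1D k (\<lambda>x. vector_derivative f (at x))" using Suc.IH c by simp
  moreover have "\<forall>x. (f has_vector_derivative vector_derivative f (at x)) (at x)"
    using d vector_derivative_works by blast
  ultimately show ?case by auto
qed

lemma C1D_imp_Ck_snd:
  fixes g :: "real \<Rightarrow> 'b::real_normed_vector"
  shows "C1D k g \<Longrightarrow> Ck k (\<lambda>p::real\<times>real. c *\<^sub>R g (snd p))"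
proof (induction k arbitrary: g c)
  case 0
  then show ?case
    by (auto intro!: continuous_intros intro: continuous_on_compose2[of UNIV g])
next
  case (Suc k)
  then obtain g' where g': "\<forall>x. (g has_vector_derivative g' x) (at x)" "C1D k g'" by auto
  have hd: "((\<lambda>p::real\<times>real. c *\<^sub>R g (snd p)) has_derivative (\<lambda>v. (c * snd v) *\<^sub>R g' (snd x))) (at x)" for x
  proof -
    have "(g has_derivative (\<lambda>h. h *\<^sub>R g' (snd x))) (at (snd x))"
      using g' by (simp add: has_vector_derivative_def)
    then have "((\<lambda>p. g (snd p)) has_derivative (\<lambda>v. snd v *\<^sub>R g' (snd x))) (at x)"
      using has_derivative_compose[OF has_derivative_snd[OF has_derivative_ident]] by blast
    from has_derivative_scaleR_right[OF this, of c] show ?thesis by (simp add: scaleR_scaleR)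
  qed
  then have "\<forall>x. (\<lambda>p::real\<times>real. c *\<^sub>R g (snd p)) differentiable (at x)"
    by (auto simp: differentiable_def)
  moreover have "frechet_derivative (\<lambda>p::real\<times>real. c *\<^sub>R g (snd p)) (at x) = (\<lambda>v. (c * snd v) *\<^sub>R g' (snd x))" for x
    using hd frechet_derivative_at by metis
  ultimately show ?case using Suc.IH g' by simp
qed


lemma inner_cis: "(a * cis t) \<bullet> (b * cis t) = a \<bullet> b"
proof -
  have s: "cos t * cos t = 1 - sin t * sin t" using sin_cos_squared_add3[of t] by linarith
  show ?thesis by (simp add: inner_complex_def algebra_simps s)
qed

lemma comp_snd_deriv:
  assumes "(\<Gamma> has_vector_derivative d) (at (snd p))"
  shows "((\<lambda>p. \<Gamma> (snd p)) has_derivative (\<lambda>v. snd v *\<^sub>R d)) (at p)"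
proof -
  have "(\<Gamma> has_derivative (\<lambda>h. h *\<^sub>R d)) (at (snd p))"
    using assms by (simp add: has_vector_derivative_def)
  then show ?thesis
    using has_derivative_compose[OF has_derivative_snd[OF has_derivative_ident]] by blast
qed

lemma tt_has_derivative:
  assumes d: "\<And>b. (\<Gamma> has_vector_derivative \<Gamma>' b) (at b)"
  shows "(twisted_torus \<Gamma> has_derivative (\<lambda>v. (1 / sqrt 2) *\<^sub>R
     (\<Gamma> (snd p) * (fst v *\<^sub>R (\<i> * cis (fst p))) + (snd v *\<^sub>R \<Gamma>' (snd p)) * cis (fst p),
      \<Gamma> (snd p) * ((- fst v) *\<^sub>R (\<i> * cis (- fst p))) + (snd v *\<^sub>R \<Gamma>' (snd p)) * cis (- fst p)))) (at p)"
proof -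
  have g: "((\<lambda>p. \<Gamma> (snd p)) has_derivative (\<lambda>v. snd v *\<^sub>R \<Gamma>' (snd p))) (at p)"
    using comp_snd_deriv d by blast
  have c1: "((\<lambda>p. cis (fst p)) has_derivative (\<lambda>v. fst v *\<^sub>R (\<i> * cis (fst p)))) (at p)"
    by (auto intro!: derivative_eq_intros)
  have c2: "((\<lambda>p. cis (- fst p)) has_derivative (\<lambda>v. (- fst v) *\<^sub>R (\<i> * cis (- fst p)))) (at p)"
    by (auto intro!: derivative_eq_intros)
  have "((\<lambda>p. (\<Gamma> (snd p) * cis (fst p), \<Gamma> (snd p) * cis (- fst p))) has_derivative
     (\<lambda>v. (\<Gamma> (snd p) * (fst v *\<^sub>R (\<i> * cis (fst p))) + (snd v *\<^sub>R \<Gamma>' (snd p)) * cis (fst p),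
      \<Gamma> (snd p) * ((- fst v) *\<^sub>R (\<i> * cis (- fst p))) + (snd v *\<^sub>R \<Gamma>' (snd p)) * cis (- fst p)))) (at p)"
    by (intro has_derivative_Pair has_derivative_mult g c1 c2)
  from has_derivative_scaleR_right[OF this, of "1 / sqrt 2"] show ?thesis
    unfolding twisted_torus_def[abs_def] by simp
qed

lemma tt_pd1:
  assumes d: "\<And>b. (\<Gamma> has_vector_derivative \<Gamma>' b) (at b)"
  shows "pd1 (twisted_torus \<Gamma>) p = (1 / sqrt 2) *\<^sub>R (\<i> * \<Gamma> (snd p) * cis (fst p), - (\<i> * \<Gamma> (snd p) * cis (- fst p)))"
  unfolding pd1_def frechet_derivative_at[OF tt_has_derivative[OF d, of p], symmetric]
  by (simp add: algebra_simps)

lemma tt_pd2: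
  assumes d: "\<And>b. (\<Gamma> has_vector_derivative \<Gamma>' b) (at b)"
  shows "pd2 (twisted_torus \<Gamma>) p = (1 / sqrt 2) *\<^sub>R (\<Gamma>' (snd p) * cis (fst p), \<Gamma>' (snd p) * cis (- fst p))"
  unfolding pd2_def frechet_derivative_at[OF tt_has_derivative[OF d, of p], symmetric]
  by simp

lemma half_sq: "(1 / sqrt 2) * (1 / sqrt 2) = (1/2::real)"
  by (simp add: divide_simps)

lemma tt_gE:
  assumes d: "\<And>b. (\<Gamma> has_vector_derivative \<Gamma>' b) (at b)"
  shows "gE (twisted_torus \<Gamma>) p = (cmod (\<Gamma> (snd p)))\<^sup>2"
proof -
  have "gE (twisted_torus \<Gamma>) p = (1/2) * ((\<i> * \<Gamma> (snd p)) \<bullet> (\<i> * \<Gamma> (snd p)) + (\<i> * \<Gamma> (snd p)) \<bullet> (\<i> * \<Gamma> (snd p)))"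
    unfolding gE_def tt_pd1[OF d] using inner_cis[of "\<i> * \<Gamma> (snd p)"]
    by (simp add: half_sq mult.assoc[symmetric])
  also have "\<dots> = (cmod (\<Gamma> (snd p)))\<^sup>2"
    by (simp add: power2_norm_eq_inner[symmetric] norm_mult)
  finally show ?thesis .
qed

lemma tt_gG:
  assumes d: "\<And>b. (\<Gamma> has_vector_derivative \<Gamma>' b) (at b)"
  shows "gG (twisted_torus \<Gamma>) p = (cmod (\<Gamma>' (snd p)))\<^sup>2"
proof -
  have "gG (twisted_torus \<Gamma>) p = (1/2) * (\<Gamma>' (snd p) \<bullet> \<Gamma>' (snd p) + \<Gamma>' (snd p) \<bullet> \<Gamma>' (snd p))"
    unfolding gG_def tt_pd2[OF d] using inner_cis[of "\<Gamma>' (snd p)"]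
    by (simp add: half_sq)
  also have "\<dots> = (cmod (\<Gamma>' (snd p)))\<^sup>2"
    by (simp add: power2_norm_eq_inner[symmetric])
  finally show ?thesis .
qed

lemma tt_gM:
  assumes d: "\<And>b. (\<Gamma> has_vector_derivative \<Gamma>' b) (at b)"
  shows "gM (twisted_torus \<Gamma>) p = 0"
proof -
  have "gM (twisted_torus \<Gamma>) p = (1/2) * ((\<i> * \<Gamma> (snd p)) \<bullet> \<Gamma>' (snd p) - (\<i> * \<Gamma> (snd p)) \<bullet> \<Gamma>' (snd p))"
    unfolding gM_def tt_pd1[OF d] tt_pd2[OF d] using inner_cis[of "\<i> * \<Gamma> (snd p)"]
    by (simp add: half_sq mult.assoc[symmetric])
  then show ?thesis by simp
qed

lemma tt_area:
  assumes d: "\<And>b. (\<Gamma> has_vector_derivative \<Gamma>' b) (at b)"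
  shows "torus_area (twisted_torus \<Gamma>) = integral (cbox (0, 0) (2*pi, 2*pi)) (\<lambda>p. cmod (\<Gamma> (snd p)) * cmod (\<Gamma>' (snd p)))"
  unfolding torus_area_def tt_gE[OF d] tt_gG[OF d] tt_gM[OF d]
  by (simp add: real_sqrt_mult)


definition Cinf :: "(real \<Rightarrow> 'a::real_normed_vector) \<Rightarrow> bool" where
  "Cinf f \<longleftrightarrow> (\<forall>k. C1D k f)"

lemma Cinf_cont: "Cinf f \<Longrightarrow> continuous_on UNIV f"
  unfolding Cinf_def using C1D_cont by blast

lemma Cinf_deriv_eq:
  assumes "Cinf f" "\<And>x. (f has_vector_derivative f' x) (at x)"
  shows "Cinf f'"
  unfolding Cinf_def
proof
  fix k
  obtain g where g: "\<forall>x. (f has_vector_derivative g x) (at x)" "C1D k g"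
    using assms(1) unfolding Cinf_def by (metis C1D.simps(2))
  have "g = f'" using g(1) assms(2) vector_derivative_unique_at by blast
  then show "C1D k f'" using g by simp
qed

lemma Cinf_has_deriv:
  assumes "Cinf f"
  shows "\<exists>f'. (\<forall>x. (f has_vector_derivative f' x) (at x)) \<and> Cinf f'"
proof -
  obtain g where g: "\<forall>x. (f has_vector_derivative g x) (at x)"
    using assms unfolding Cinf_def by (metis C1D.simps(2))
  then show ?thesis using Cinf_deriv_eq[OF assms] by blast
qed

lemma Cinf_add: "Cinf f \<Longrightarrow> Cinf g \<Longrightarrow> Cinf (\<lambda>x. f x + g x)"
  unfolding Cinf_def using C1D_add by blast
lemma Cinf_mult: fixes f g :: "real \<Rightarrow> 'a::real_normed_algebra"
  shows "Cinf f \<Longrightarrow> Cinf g \<Longrightarrow> Cinf (\<lambda>x. f x * g x)"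
  unfolding Cinf_def using C1D_mult by blast
lemma Cinf_linear: "bounded_linear L \<Longrightarrow> Cinf f \<Longrightarrow> Cinf (\<lambda>x. L (f x))"
  unfolding Cinf_def using C1D_linear by blast
lemma Cinf_const: "Cinf (\<lambda>x. c)"
  unfolding Cinf_def using C1D_const by blast
lemma Cinf_inverse: fixes f :: "real \<Rightarrow> 'a::real_normed_field"
  shows "(\<And>x. f x \<noteq> 0) \<Longrightarrow> Cinf f \<Longrightarrow> Cinf (\<lambda>x. inverse (f x))"
  unfolding Cinf_def using C1D_inverse by blast

locale chek =
  fixes \<gamma> \<gamma>1 \<gamma>2 :: "real \<Rightarrow> complex" and u :: complex
  assumes Cg: "Cinf \<gamma>"
    and d0: "\<And>x. (\<gamma> has_vector_derivative \<gamma>1 x) (at x)"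
    and d1: "\<And>x. (\<gamma>1 has_vector_derivative \<gamma>2 x) (at x)"
    and per: "\<And>t. \<gamma> (t + 2*pi) = \<gamma> t"
    and nz0: "\<And>t. \<gamma> t \<noteq> 0"
    and nz1: "\<And>t. \<gamma>1 t \<noteq> 0"
    and hp: "\<And>t. Re (\<gamma> t * cnj u) > 0"
begin

lemma Cg1: "Cinf \<gamma>1" using Cinf_deriv_eq[OF Cg d0] .
lemma Cg2: "Cinf \<gamma>2" using Cinf_deriv_eq[OF Cg1 d1] .

lemma per1: "\<gamma>1 (t + 2*pi) = \<gamma>1 t"
proof -
  have "((\<lambda>s. \<gamma> (s + 2*pi)) has_vector_derivative \<gamma>1 (t + 2*pi)) (at t)"
  proof -
    have "((\<lambda>s. s + 2*pi) has_vector_derivative 1) (at t)"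
      by (auto intro!: derivative_eq_intros)
    from vector_diff_chain_at[OF this d0] show ?thesis by (simp add: o_def)
  qed
  then have "(\<gamma> has_vector_derivative \<gamma>1 (t + 2*pi)) (at t)" using per by simp
  then show ?thesis using d0 vector_derivative_unique_at by blast
qed

definition th1 :: "real \<Rightarrow> real" where "th1 t = Im (\<gamma>1 t * inverse (\<gamma> t))"
definition th :: "real \<Rightarrow> real" where "th t = Im (Ln (\<gamma> t * cnj u))"

lemma Cinf_th1: "Cinf th1"
proof -
  have "Cinf (\<lambda>t. \<gamma>1 t * inverse (\<gamma> t))"
    using Cinf_mult Cg1 Cinf_inverse nz0 Cg by blast
  then show ?thesis unfolding th1_def[abs_def] using Cinf_linear[OF bounded_linear_Im] by blast
qed

lemma th_deriv: "(th has_real_derivative th1 t) (at t)"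
proof -
  have u0: "u \<noteq> 0" using hp[of t] by auto
  have nn: "\<gamma> t * cnj u \<notin> \<real>\<^sub>\<le>\<^sub>0" using hp[of t]
    by (auto simp: complex_nonpos_Reals_iff)
  have a: "((\<lambda>s. \<gamma> s * cnj u) has_vector_derivative \<gamma>1 t * cnj u) (at t)"
    using d0 by (auto intro!: derivative_eq_intros)
  from field_vector_diff_chain_at[OF a has_field_derivative_Ln[OF nn]]
  have dd: "((\<lambda>s. Ln (\<gamma> s * cnj u)) has_vector_derivative \<gamma>1 t * cnj u * inverse (\<gamma> t * cnj u)) (at t)"
    by (simp add: o_def)
  have eq: "\<gamma>1 t * cnj u * inverse (\<gamma> t * cnj u) = \<gamma>1 t * inverse (\<gamma> t)"
    using u0 nz0[of t] by (simp add: inverse_mult_distrib)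
  have "((\<lambda>s. Ln (\<gamma> s * cnj u)) has_vector_derivative \<gamma>1 t * inverse (\<gamma> t)) (at t)"
    using dd unfolding eq .
  from bounded_linear.has_vector_derivative[OF bounded_linear_Im this]
  have "(th has_vector_derivative th1 t) (at t)"
    unfolding th_def[abs_def] th1_def .
  then show ?thesis by (simp only: has_real_derivative_iff_has_vector_derivative)
qed

lemma Cinf_th: "Cinf th"
  unfolding Cinf_def
proof
  fix k show "C1D k th"
  proof (cases k)
    case 0
    have "continuous_on UNIV th"
      using th_deriv by (meson DERIV_isCont continuous_at_imp_continuous_on)
    then show ?thesis using 0 by simp
  next
    case (Suc m)
    have "\<forall>x. (th has_vector_derivative th1 x) (at x)"
      using th_deriv has_real_derivative_iff_has_vector_derivative by blast
    then show ?thesis using Suc Cinf_th1 unfolding Cinf_def by auto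
  qed
qed

definition hh :: "real \<times> real \<Rightarrow> real" where "hh p = th (snd p)"

lemma smooth_hh: "smooth_map hh"
  unfolding smooth_map_def
proof
  fix k
  have "Ck k (\<lambda>p::real\<times>real. 1 *\<^sub>R th (snd p))"
    using C1D_imp_Ck_snd Cinf_th unfolding Cinf_def by blast
  then show "Ck k hh" unfolding hh_def[abs_def] by simp
qed

lemma per_th: "th (t + 2*pi) = th t"
  unfolding th_def using per by simp

lemma periodic_hh: "periodic2 hh"
  unfolding periodic2_def hh_def using per_th by simp

lemma hh_deriv: "(hh has_derivative (\<lambda>v. snd v *\<^sub>R th1 (snd p))) (at p)"
  unfolding hh_def[abs_def]
  by (rule comp_snd_deriv) (use th_deriv has_real_derivative_iff_has_vector_derivative in blast)

lemma pd_hh: "pd1 hh p = 0" "pd2 hh p = th1 (snd p)"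
  unfolding pd1_def pd2_def frechet_derivative_at[OF hh_deriv, symmetric] by simp_all

definition V :: "real \<Rightarrow> complex" where
  "V t = \<i> * of_real (th1 t) * inverse (cnj (\<gamma>1 t))"

lemma Cinf_V: "Cinf V"
proof -
  have a: "Cinf (\<lambda>t. complex_of_real (th1 t))"
    using Cinf_linear[OF bounded_linear_of_real Cinf_th1] .
  have b: "Cinf (\<lambda>t. inverse (cnj (\<gamma>1 t)))"
    using Cinf_inverse[OF _ Cinf_linear[OF bounded_linear_cnj Cg1]] nz1 by simp
  show ?thesis unfolding V_def[abs_def]
    using Cinf_mult[OF Cinf_mult[OF Cinf_const a] b] .
qed

definition V1 :: "real \<Rightarrow> complex" where "V1 t = vector_derivative V (at t)"

lemma dV: "(V has_vector_derivative V1 t) (at t)" and Cinf_V1: "Cinf V1"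
proof -
  obtain f' where f': "\<forall>x. (V has_vector_derivative f' x) (at x)" "Cinf f'"
    using Cinf_has_deriv[OF Cinf_V] by blast
  then have "V1 = f'" unfolding V1_def by (auto intro!: ext vector_derivative_at)
  then show "(V has_vector_derivative V1 t) (at t)" "Cinf V1" using f' by auto
qed

abbreviation X where "X \<equiv> twisted_torus \<gamma>"

lemma grad: "grad_push X hh p = (th1 (snd p) / (cmod (\<gamma>1 (snd p)))\<^sup>2) *\<^sub>R pd2 X p"
proof -
  have D: "gE X p * gG X p - (gM X p)\<^sup>2 = (cmod (\<gamma> (snd p)))\<^sup>2 * (cmod (\<gamma>1 (snd p)))\<^sup>2"
    using tt_gE[OF d0] tt_gG[OF d0] tt_gM[OF d0] by simp
  have "cmod (\<gamma> (snd p)) \<noteq> 0" using nz0 by simp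
  then show ?thesis
    unfolding grad_push_def Let_def D pd_hh tt_gE[OF d0] tt_gG[OF d0] tt_gM[OF d0]
    by (simp add: field_simps)
qed

lemma Xt: "(\<lambda>p. X p + t *\<^sub>R cJ (grad_push X hh p)) = twisted_torus (\<lambda>b. \<gamma> b + of_real t * V b)"
proof
  fix p :: "real \<times> real"
  obtain a b where p: "p = (a, b)" by (cases p)
  have e: "complex_of_real (th1 b / (cmod (\<gamma>1 b))\<^sup>2) * \<gamma>1 b = of_real (th1 b) * inverse (cnj (\<gamma>1 b))"
  proof -
    have n: "complex_of_real ((cmod (\<gamma>1 b))\<^sup>2) = \<gamma>1 b * cnj (\<gamma>1 b)"
      by (rule complex_norm_square)
    have c: "cnj (\<gamma>1 b) \<noteq> 0" using nz1[of b] by simp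
    have "complex_of_real (th1 b / (cmod (\<gamma>1 b))\<^sup>2) * \<gamma>1 b
        = of_real (th1 b) * \<gamma>1 b / complex_of_real ((cmod (\<gamma>1 b))\<^sup>2)"
      by (simp add: of_real_divide)
    also have "\<dots> = of_real (th1 b) * inverse (cnj (\<gamma>1 b))"
      unfolding n using nz1[of b] c by (simp add: field_simps)
    finally show ?thesis .
  qed
  have "X p + t *\<^sub>R cJ (grad_push X hh p) =
     (1 / sqrt 2) *\<^sub>R ((\<gamma> b + of_real t * (\<i> * (of_real (th1 b / (cmod (\<gamma>1 b))\<^sup>2) * \<gamma>1 b))) * cis a,
                      (\<gamma> b + of_real t * (\<i> * (of_real (th1 b / (cmod (\<gamma>1 b))\<^sup>2) * \<gamma>1 b))) * cis (- a))"
    unfolding grad tt_pd2[OF d0] twisted_torus_def cJ_def p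
    by (simp add: scaleR_conv_of_real algebra_simps)
  also have "\<dots> = twisted_torus (\<lambda>b. \<gamma> b + of_real t * V b) p"
    unfolding twisted_torus_def V_def p using e by (simp add: mult.assoc)
  finally show "X p + t *\<^sub>R cJ (grad_push X hh p) = twisted_torus (\<lambda>b. \<gamma> b + of_real t * V b) p" .
qed

lemma area_t: "torus_area (\<lambda>p. X p + t *\<^sub>R cJ (grad_push X hh p)) =
   integral (cbox (0, 0) (2*pi, 2*pi)) (\<lambda>p. cmod (\<gamma> (snd p) + of_real t * V (snd p)) * cmod (\<gamma>1 (snd p) + of_real t * V1 (snd p)))"
proof -
  have "((\<lambda>b. \<gamma> b + of_real t * V b) has_vector_derivative \<gamma>1 b + of_real t * V1 b) (at b)" for b
    using d0 dV by (auto intro!: derivative_eq_intros)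
  from tt_area[OF this] show ?thesis unfolding Xt .
qed

end

lemma alg_id:
  fixes x y p q u v R S :: real
  assumes R: "R > 0" and S: "S > 0" and R2: "R\<^sup>2 = x\<^sup>2 + y\<^sup>2" and S2: "S\<^sup>2 = p\<^sup>2 + q\<^sup>2"
  shows "((p\<^sup>2 + q\<^sup>2 + x * u + y * v) * (R * S) - (x * p + y * q) * ((x * p + y * q) / R * S + R * ((p * u + q * v) / S))) / (R * S)\<^sup>2
     = -((x * q - y * p)\<^sup>2) / (R ^ 3 * S) + (x * q - y * p) * (u * q - v * p) / (R * S ^ 3) + 2 * ((x * q - y * p)\<^sup>2 / (R ^ 3 * S))"
proof -
  define P where "P = x * p + y * q"
  define J where "J = x * q - y * p"
  define W where "W = p * u + q * v"
  define K where "K = u * q - v * p"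
  define T where "T = x * u + y * v"
  have e: "P\<^sup>2 = R\<^sup>2 * S\<^sup>2 - J\<^sup>2" unfolding R2 S2 P_def J_def by (simp add: power2_eq_square algebra_simps)
  have k: "T * S\<^sup>2 - P * W = J * K" unfolding S2 P_def J_def W_def K_def T_def by (simp add: power2_eq_square algebra_simps)
  have L: "((S\<^sup>2 + T) * (R * S) - P * (P / R * S + R * (W / S))) / (R * S)\<^sup>2
      = ((S\<^sup>2 + T) * R\<^sup>2 * S\<^sup>2 - P\<^sup>2 * S\<^sup>2 - P * W * R\<^sup>2) / (R ^ 3 * S ^ 3)"
    using R S by (simp add: field_simps power2_eq_square power3_eq_cube)
  have Rr: "-(J\<^sup>2) / (R ^ 3 * S) + J * K / (R * S ^ 3) + 2 * (J\<^sup>2 / (R ^ 3 * S))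
      = (J\<^sup>2 * S\<^sup>2 + J * K * R\<^sup>2) / (R ^ 3 * S ^ 3)"
    using R S by (simp add: field_simps power2_eq_square power3_eq_cube)
  have N: "(S\<^sup>2 + T) * R\<^sup>2 * S\<^sup>2 - P\<^sup>2 * S\<^sup>2 - P * W * R\<^sup>2 = J\<^sup>2 * S\<^sup>2 + J * K * R\<^sup>2"
  proof -
    have "(S\<^sup>2 + T) * R\<^sup>2 * S\<^sup>2 - P\<^sup>2 * S\<^sup>2 - P * W * R\<^sup>2 = J\<^sup>2 * S\<^sup>2 + R\<^sup>2 * (T * S\<^sup>2 - P * W)"
      unfolding e by (simp add: algebra_simps)
    then show ?thesis unfolding k by (simp add: algebra_simps)
  qed
  have G: "((S\<^sup>2 + T) * (R * S) - P * (P / R * S + R * (W / S))) / (R * S)\<^sup>2 =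
     -(J\<^sup>2) / (R ^ 3 * S) + J * K / (R * S ^ 3) + 2 * (J\<^sup>2 / (R ^ 3 * S))"
    using L Rr N by simp
  show ?thesis using G unfolding P_def J_def W_def K_def T_def S2 by (simp add: add.assoc)
qed


lemma cmod_comp_deriv:
  fixes f :: "real \<Rightarrow> complex"
  assumes d: "(f has_vector_derivative f') (at b within S)" and nz: "f b \<noteq> 0"
  shows "((\<lambda>b. cmod (f b)) has_real_derivative (Re (f b) * Re f' + Im (f b) * Im f') / cmod (f b)) (at b within S)"
proof -
  have n: "(norm has_derivative (\<lambda>h. h \<bullet> sgn (f b))) (at (f b))" using has_derivative_norm[OF nz] .
  have d': "(f has_derivative (\<lambda>h. h *\<^sub>R f')) (at b within S)" using d by (simp add: has_vector_derivative_def)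
  have "((\<lambda>b. norm (f b)) has_derivative (\<lambda>h. (h *\<^sub>R f') \<bullet> sgn (f b))) (at b within S)"
    using has_derivative_compose[OF d' n] .
  moreover have "(\<lambda>h. (h *\<^sub>R f') \<bullet> sgn (f b)) = (*) ((Re (f b) * Re f' + Im (f b) * Im f') / cmod (f b))"
    by (rule ext) (simp add: inner_complex_def sgn_div_norm add_divide_distrib algebra_simps divide_inverse)
  ultimately show ?thesis by (simp add: has_field_derivative_def)
qed

lemma cmod_line_deriv:
  fixes a b :: complex
  assumes nz: "a + of_real t * b \<noteq> 0"
  shows "((\<lambda>t. cmod (a + of_real t * b)) has_real_derivative
           Re (cnj (a + of_real t * b) * b) / cmod (a + of_real t * b)) (at t within S)"
proof -
  have d: "((\<lambda>t. a + of_real t * b) has_vector_derivative b) (at t within S)"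
    by (auto intro!: derivative_eq_intros)
  have eq: "Re (cnj z * b) = Re z * Re b + Im z * Im b" for z :: complex
    by simp
  show ?thesis unfolding eq by (rule cmod_comp_deriv[OF d nz])
qed

lemma small_pert:
  fixes f g :: "real \<Rightarrow> complex"
  assumes K: "compact K" "K \<noteq> {}" and cf: "continuous_on K f" and cg: "continuous_on K g"
    and nz: "\<And>x. x \<in> K \<Longrightarrow> f x \<noteq> 0"
  shows "\<exists>d>0. \<forall>t x. \<bar>t\<bar> < d \<longrightarrow> x \<in> K \<longrightarrow> f x + of_real t * g x \<noteq> 0"
proof -
  have cn: "continuous_on K (\<lambda>x. norm (f x))" using continuous_on_norm[OF cf] .
  obtain x0 where x0: "x0 \<in> K" "\<forall>y\<in>K. norm (f x0) \<le> norm (f y)"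
    using continuous_attains_inf[OF K cn] by auto
  define m where "m = norm (f x0)"
  have m: "m > 0" using nz[OF x0(1)] m_def by auto
  have "bounded (g ` K)" by (rule compact_imp_bounded[OF compact_continuous_image[OF cg K(1)]])
  then obtain B where B: "B > 0" "\<forall>y\<in>g ` K. norm y \<le> B"
    unfolding bounded_pos by auto
  have B': "norm (g x) \<le> B" if "x \<in> K" for x using B(2) that by auto
  show ?thesis
  proof (intro exI[of _ "m / B"] conjI allI impI)
    show "m / B > 0" using m B by simp
    fix t x assume t: "\<bar>t\<bar> < m / B" and x: "x \<in> K"
    have "norm (of_real t * g x) = \<bar>t\<bar> * norm (g x)" by (simp add: norm_mult)
    also have "\<dots> \<le> \<bar>t\<bar> * B" using B'[OF x] by (simp add: mult_left_mono)
    also have "\<dots> < m" using t B by (simp add: field_simps)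
    also have "\<dots> \<le> norm (f x)" using x0(2) x m_def by auto
    finally have lt: "norm (of_real t * g x) < norm (f x)" .
    show "f x + of_real t * g x \<noteq> 0"
    proof
      assume "f x + of_real t * g x = 0"
      then have "f x = - (of_real t * g x)" by (simp add: eq_neg_iff_add_eq_0)
      then have "norm (f x) = norm (of_real t * g x)" by simp
      then show False using lt by simp
    qed
  qed
qed

context chek begin

lemma cont_g: "continuous_on UNIV \<gamma>" using Cinf_cont[OF Cg] .
lemma cont_g1: "continuous_on UNIV \<gamma>1" using Cinf_cont[OF Cg1] .
lemma cont_g2: "continuous_on UNIV \<gamma>2" using Cinf_cont[OF Cg2] .
lemma cont_V: "continuous_on UNIV V" using Cinf_cont[OF Cinf_V] .
lemma cont_V1: "continuous_on UNIV V1" using Cinf_cont[OF Cinf_V1] .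
lemma cont_th1: "continuous_on UNIV th1" using Cinf_cont[OF Cinf_th1] .

lemma cc_g [continuous_intros]: "continuous_on S f \<Longrightarrow> continuous_on S (\<lambda>x. \<gamma> (f x))"
  using continuous_on_compose2[OF cont_g] by blast
lemma cc_g1 [continuous_intros]: "continuous_on S f \<Longrightarrow> continuous_on S (\<lambda>x. \<gamma>1 (f x))"
  using continuous_on_compose2[OF cont_g1] by blast
lemma cc_g2 [continuous_intros]: "continuous_on S f \<Longrightarrow> continuous_on S (\<lambda>x. \<gamma>2 (f x))"
  using continuous_on_compose2[OF cont_g2] by blast
lemma cc_V [continuous_intros]: "continuous_on S f \<Longrightarrow> continuous_on S (\<lambda>x. V (f x))"
  using continuous_on_compose2[OF cont_V] by blast
lemma cc_V1 [continuous_intros]: "continuous_on S f \<Longrightarrow> continuous_on S (\<lambda>x. V1 (f x))"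
  using continuous_on_compose2[OF cont_V1] by blast
lemma cc_th1 [continuous_intros]: "continuous_on S f \<Longrightarrow> continuous_on S (\<lambda>x. th1 (f x))"
  using continuous_on_compose2[OF cont_th1] by blast

definition A :: "real \<Rightarrow> real \<Rightarrow> complex" where "A t b = \<gamma> b + of_real t * V b"
definition B :: "real \<Rightarrow> real \<Rightarrow> complex" where "B t b = \<gamma>1 b + of_real t * V1 b"

lemma cA [continuous_intros]: "continuous_on S f \<Longrightarrow> continuous_on S g \<Longrightarrow> continuous_on S (\<lambda>x. A (f x) (g x))"
  unfolding A_def by (intro continuous_intros)
lemma cB [continuous_intros]: "continuous_on S f \<Longrightarrow> continuous_on S g \<Longrightarrow> continuous_on S (\<lambda>x. B (f x) (g x))"
  unfolding B_def by (intro continuous_intros)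

definition F :: "real \<Rightarrow> real \<times> real \<Rightarrow> real" where
  "F t p = cmod (A t (snd p)) * cmod (B t (snd p))"

definition Fx :: "real \<Rightarrow> real \<times> real \<Rightarrow> real" where
  "Fx t p = cmod (A t (snd p)) * (Re (cnj (B t (snd p)) * V1 (snd p)) / cmod (B t (snd p)))
          + Re (cnj (A t (snd p)) * V (snd p)) / cmod (A t (snd p)) * cmod (B t (snd p))"

abbreviation BX where "BX \<equiv> cbox (0::real, 0::real) (2*pi, 2*pi)"

lemma small_delta: "\<exists>d>0. \<forall>t b. \<bar>t\<bar> < d \<longrightarrow> b \<in> {0..2*pi} \<longrightarrow>
    \<gamma> b + of_real t * V b \<noteq> 0 \<and> \<gamma>1 b + of_real t * V1 b \<noteq> 0"
proof -
  have K: "compact {0..2*pi::real}" "{0..2*pi::real} \<noteq> {}" by auto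
  have c: "continuous_on {0..2*pi} \<gamma>" "continuous_on {0..2*pi} V"
     "continuous_on {0..2*pi} \<gamma>1" "continuous_on {0..2*pi} V1"
    using continuous_on_subset[OF cont_g] continuous_on_subset[OF cont_V]
      continuous_on_subset[OF cont_g1] continuous_on_subset[OF cont_V1] by auto
  obtain d1 where d1: "d1 > 0" "\<forall>t x. \<bar>t\<bar> < d1 \<longrightarrow> x \<in> {0..2*pi} \<longrightarrow> \<gamma> x + of_real t * V x \<noteq> 0"
    using small_pert[OF K c(1) c(2) nz0] by blast
  obtain d2 where d2: "d2 > 0" "\<forall>t x. \<bar>t\<bar> < d2 \<longrightarrow> x \<in> {0..2*pi} \<longrightarrow> \<gamma>1 x + of_real t * V1 x \<noteq> 0"
    using small_pert[OF K c(3) c(4) nz1] by blast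
  show ?thesis
  proof (intro exI[of _ "min d1 d2"] conjI allI impI)
    show "min d1 d2 > 0" using d1 d2 by simp
    fix t b assume "\<bar>t\<bar> < min d1 d2" "b \<in> {0..2*pi}"
    then show "\<gamma> b + of_real t * V b \<noteq> 0" "\<gamma>1 b + of_real t * V1 b \<noteq> 0"
      using d1(2) d2(2) by simp_all
  qed
qed

lemma snd_BX: "p \<in> BX \<Longrightarrow> snd p \<in> {0..2*pi}"
  by (cases p) (auto simp: cbox_Pair_iff)

lemma area_deriv: "((\<lambda>t. torus_area (\<lambda>p. X p + t *\<^sub>R cJ (grad_push X hh p))) has_real_derivative
                    integral BX (Fx 0)) (at 0)"
proof -
  obtain d where d: "d > 0" "\<forall>t b. \<bar>t\<bar> < d \<longrightarrow> b \<in> {0..2*pi} \<longrightarrow>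
    \<gamma> b + of_real t * V b \<noteq> 0 \<and> \<gamma>1 b + of_real t * V1 b \<noteq> 0"
    using small_delta by blast
  let ?U = "ball (0::real) d"
  have inU: "t \<in> ?U \<Longrightarrow> \<bar>t\<bar> < d" for t by (simp add: dist_real_def)
  have nzU: "t \<in> ?U \<Longrightarrow> p \<in> BX \<Longrightarrow> \<gamma> (snd p) + of_real t * V (snd p) \<noteq> 0 \<and> \<gamma>1 (snd p) + of_real t * V1 (snd p) \<noteq> 0"
    for t p using d(2) inU snd_BX by simp
  have fx: "((\<lambda>t. F t p) has_field_derivative Fx t p) (at t within ?U)" if "t \<in> ?U" "p \<in> BX" for t p
  proof -
    note n = nzU[OF that]
    have a: "((\<lambda>t. cmod (A t (snd p))) has_real_derivative
          Re (cnj (A t (snd p)) * V (snd p)) / cmod (A t (snd p))) (at t within ?U)"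
      unfolding A_def by (rule cmod_line_deriv) (use n in simp)
    have b: "((\<lambda>t. cmod (B t (snd p))) has_real_derivative
          Re (cnj (B t (snd p)) * V1 (snd p)) / cmod (B t (snd p))) (at t within ?U)"
      unfolding B_def by (rule cmod_line_deriv) (use n in simp)
    show ?thesis unfolding F_def Fx_def by (rule DERIV_mult'[OF a b])
  qed
  have int: "F t integrable_on BX" for t
    unfolding F_def[abs_def] by (intro integrable_continuous continuous_intros)
  have cont: "continuous_on (?U \<times> BX) (\<lambda>(t, p). Fx t p)"
  proof -
    have mem: "fst z \<in> ?U" "snd z \<in> BX" if "z \<in> ?U \<times> BX" for z
      using that by (simp_all add: mem_Times_iff)
    have nA: "cmod (A (fst z) (snd (snd z))) \<noteq> 0" if "z \<in> ?U \<times> BX" for z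
    proof -
      have "\<gamma> (snd (snd z)) + of_real (fst z) * V (snd (snd z)) \<noteq> 0"
        using nzU[OF mem[OF that]] by blast
      then show ?thesis by (simp add: A_def)
    qed
    have nB: "cmod (B (fst z) (snd (snd z))) \<noteq> 0" if "z \<in> ?U \<times> BX" for z
    proof -
      have "\<gamma>1 (snd (snd z)) + of_real (fst z) * V1 (snd (snd z)) \<noteq> 0"
        using nzU[OF mem[OF that]] by blast
      then show ?thesis by (simp add: B_def)
    qed
    have "continuous_on (?U \<times> BX) (\<lambda>z. Fx (fst z) (snd z))"
      unfolding Fx_def
      by (intro continuous_intros ballI nA nB)
    then show ?thesis by (simp add: case_prod_beta')
  qed
  have L: "((\<lambda>t. integral BX (F t)) has_field_derivative integral BX (Fx 0)) (at 0 within ?U)"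
    by (rule leibniz_rule_field_derivative[OF fx int cont]) (use d in auto)
  then have L2: "((\<lambda>t. integral BX (F t)) has_real_derivative integral BX (Fx 0)) (at 0)"
    using at_within_open[of 0 ?U] d(1) by simp
  have eqf: "(\<lambda>t. torus_area (\<lambda>p. X p + t *\<^sub>R cJ (grad_push X hh p))) = (\<lambda>t. integral BX (F t))"
  proof (rule ext)
    fix t
    have e: "F t = (\<lambda>p. cmod (\<gamma> (snd p) + of_real t * V (snd p)) * cmod (\<gamma>1 (snd p) + of_real t * V1 (snd p)))"
      by (rule ext) (simp only: F_def A_def B_def)
    show "torus_area (\<lambda>p. X p + t *\<^sub>R cJ (grad_push X hh p)) = integral BX (F t)"
      unfolding area_t e ..
  qed
  show ?thesis unfolding eqf by (rule L2)
qed

end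


lemma re_deriv: "(f has_vector_derivative f') (at b) \<Longrightarrow> ((\<lambda>b. Re (f b)) has_real_derivative Re f') (at b)"
  using bounded_linear.has_vector_derivative[OF bounded_linear_Re]
  by (simp add: has_real_derivative_iff_has_vector_derivative)
lemma im_deriv: "(f has_vector_derivative f') (at b) \<Longrightarrow> ((\<lambda>b. Im (f b)) has_real_derivative Im f') (at b)"
  using bounded_linear.has_vector_derivative[OF bounded_linear_Im]
  by (simp add: has_real_derivative_iff_has_vector_derivative)

lemma Re_V_form:
  fixes a a1 :: complex and t :: real
  assumes "a1 \<noteq> 0"
  shows "Re (cnj a * (\<i> * of_real t * inverse (cnj a1))) = - t * (Re a * Im a1 - Im a * Re a1) / ((Re a1)\<^sup>2 + (Im a1)\<^sup>2)"
  using assms by (simp add: Re_divide Im_divide algebra_simps power2_eq_square divide_simps)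

lemma th1_form:
  fixes a a1 :: complex
  shows "Im (a1 * inverse a) = (Re a * Im a1 - Im a * Re a1) / ((Re a)\<^sup>2 + (Im a)\<^sup>2)"
  by (simp add: Im_divide algebra_simps power2_eq_square divide_simps)

context chek begin

definition Dd :: "real \<Rightarrow> real" where
  "Dd b = cmod (\<gamma> b) * (Re (cnj (\<gamma>1 b) * V1 b) / cmod (\<gamma>1 b))
          + Re (cnj (\<gamma> b) * V b) / cmod (\<gamma> b) * cmod (\<gamma>1 b)"

lemma re_id: "Re (cnj (\<gamma>1 b) * V1 b) = - Re (cnj (\<gamma>2 b) * V b)"
proof -
  have q0: "Re (cnj (\<gamma>1 s) * V s) = 0" for s
    using nz1[of s] unfolding V_def by (simp add: field_simps)
  have "((\<lambda>s. Re (cnj (\<gamma>1 s) * V s)) has_vector_derivative Re (cnj (\<gamma>1 b) * V1 b + cnj (\<gamma>2 b) * V b)) (at b)"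
    by (intro bounded_linear.has_vector_derivative[OF bounded_linear_Re] has_vector_derivative_mult
          has_vector_derivative_cnj d1 dV)
  moreover have "((\<lambda>s. Re (cnj (\<gamma>1 s) * V s)) has_vector_derivative 0) (at b)"
    unfolding q0 by (rule has_vector_derivative_const)
  ultimately have "Re (cnj (\<gamma>1 b) * V1 b + cnj (\<gamma>2 b) * V b) = 0"
    using vector_derivative_unique_at by blast
  then show ?thesis by simp
qed

definition gg :: "real \<Rightarrow> real" where
  "gg b = (Re (\<gamma> b) * Im (\<gamma>1 b) - Im (\<gamma> b) * Re (\<gamma>1 b))\<^sup>2 / (cmod (\<gamma> b) ^ 3 * cmod (\<gamma>1 b))"

definition cc :: "real \<Rightarrow> real" where
  "cc b = (Re (\<gamma> b) * Re (\<gamma>1 b) + Im (\<gamma> b) * Im (\<gamma>1 b)) / (cmod (\<gamma> b) * cmod (\<gamma>1 b))"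

lemma cc_deriv: "(cc has_real_derivative (Dd b + 2 * gg b)) (at b)"
proof -
  define x where "x = Re (\<gamma> b)"
  define y where "y = Im (\<gamma> b)"
  define p where "p = Re (\<gamma>1 b)"
  define q where "q = Im (\<gamma>1 b)"
  define u where "u = Re (\<gamma>2 b)"
  define v where "v = Im (\<gamma>2 b)"
  define R where "R = cmod (\<gamma> b)"
  define S where "S = cmod (\<gamma>1 b)"
  have R: "R > 0" "R\<^sup>2 = x\<^sup>2 + y\<^sup>2" using nz0[of b] unfolding R_def x_def y_def by (auto simp: cmod_power2)
  have S: "S > 0" "S\<^sup>2 = p\<^sup>2 + q\<^sup>2" using nz1[of b] unfolding S_def p_def q_def by (auto simp: cmod_power2)
  have dP: "((\<lambda>b. Re (\<gamma> b) * Re (\<gamma>1 b) + Im (\<gamma> b) * Im (\<gamma>1 b)) has_real_derivative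
            (p\<^sup>2 + q\<^sup>2 + x * u + y * v)) (at b)"
    by (rule derivative_eq_intros re_deriv im_deriv d0 d1 refl)+
       (simp add: x_def y_def p_def q_def u_def v_def power2_eq_square algebra_simps)
  have dr: "((\<lambda>b. cmod (\<gamma> b)) has_real_derivative (x * p + y * q) / R) (at b)"
    using cmod_comp_deriv[OF d0 nz0] unfolding x_def y_def p_def q_def R_def .
  have ds: "((\<lambda>b. cmod (\<gamma>1 b)) has_real_derivative (p * u + q * v) / S) (at b)"
    using cmod_comp_deriv[OF d1 nz1] unfolding u_def v_def p_def q_def S_def .
  have dc: "(cc has_real_derivative
      ((p\<^sup>2 + q\<^sup>2 + x * u + y * v) * (R * S) - (x * p + y * q) * ((x * p + y * q) / R * S + (p * u + q * v) / S * R)) / ((R * S) * (R * S))) (at b)"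
    unfolding cc_def[abs_def]
    using DERIV_divide[OF dP DERIV_mult[OF dr ds]] R S
    unfolding x_def[symmetric] y_def[symmetric] p_def[symmetric] q_def[symmetric] R_def[symmetric] S_def[symmetric]
    by simp
  have "((p\<^sup>2 + q\<^sup>2 + x * u + y * v) * (R * S) - (x * p + y * q) * ((x * p + y * q) / R * S + (p * u + q * v) / S * R)) / ((R * S) * (R * S))
     = -((x * q - y * p)\<^sup>2) / (R ^ 3 * S) + (x * q - y * p) * (u * q - v * p) / (R * S ^ 3) + 2 * ((x * q - y * p)\<^sup>2 / (R ^ 3 * S))"
    using alg_id[OF R(1) S(1) R(2) S(2), of u v] by (simp add: power2_eq_square mult.commute)
  also have "\<dots> = Dd b + 2 * gg b"
  proof -
    have t: "th1 b = (x * q - y * p) / R\<^sup>2"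
      unfolding th1_def th1_form R(2) x_def y_def p_def q_def by simp
    have a: "Re (cnj (\<gamma> b) * V b) = - th1 b * (x * q - y * p) / S\<^sup>2"
      unfolding V_def Re_V_form[OF nz1] S(2) x_def y_def p_def q_def by simp
    have c: "Re (cnj (\<gamma>2 b) * V b) = - th1 b * (u * q - v * p) / S\<^sup>2"
      unfolding V_def Re_V_form[OF nz1] S(2) u_def v_def p_def q_def by simp
    have "Dd b = R * (th1 b * (u * q - v * p) / S\<^sup>2 / S) + (- th1 b * (x * q - y * p) / S\<^sup>2) / R * S"
      unfolding Dd_def re_id a c R_def S_def by simp
    also have "\<dots> = -((x * q - y * p)\<^sup>2) / (R ^ 3 * S) + (x * q - y * p) * (u * q - v * p) / (R * S ^ 3)"
      unfolding t using R(1) S(1) by (simp add: field_simps power2_eq_square power3_eq_cube)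
    finally show ?thesis
      unfolding gg_def x_def[symmetric] y_def[symmetric] p_def[symmetric] q_def[symmetric] R_def[symmetric] S_def[symmetric]
      by simp
  qed
  finally show ?thesis using dc by simp
qed

end


context chek begin

lemma Fx0: "Fx 0 p = Dd (snd p)"
  unfolding Fx_def A_def B_def Dd_def by simp

lemma cont_Dd: "continuous_on UNIV Dd"
  unfolding Dd_def[abs_def] by (intro continuous_intros) (auto simp: nz0 nz1)

lemma cont_gg: "continuous_on UNIV gg"
  unfolding gg_def[abs_def] by (intro continuous_intros) (auto simp: nz0 nz1)

lemma gg_nonneg: "gg b \<ge> 0"
  unfolding gg_def by simp

lemma int_BX: "integral BX (Fx 0) = 2 * pi * integral {0..2*pi} Dd"
proof -
  have e: "Fx 0 = (\<lambda>p. Dd (snd p))" by (rule ext) (simp add: Fx0)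
  have c: "continuous_on (cbox (0, 0) (2 * pi, 2 * pi)) (\<lambda>p::real\<times>real. Dd (snd p))"
    by (intro continuous_on_compose2[OF cont_Dd] continuous_intros) auto
  have "integral BX (Fx 0) = integral (cbox 0 (2*pi)) (\<lambda>x. integral (cbox 0 (2*pi)) (\<lambda>y. Dd (snd (x, y))))"
    unfolding e by (rule integral_prod_continuous[OF c])
  also have "\<dots> = 2 * pi * integral {0..2*pi} Dd"
    by simp
  finally show ?thesis .
qed

lemma int_Dd: "integral {0..2*pi} Dd = - 2 * integral {0..2*pi} gg"
proof -
  have "((\<lambda>b. Dd b + 2 * gg b) has_integral cc (2*pi) - cc 0) {0..2*pi}"
    by (rule fundamental_theorem_of_calculus)
       (auto simp: has_real_derivative_iff_has_vector_derivative[symmetric] intro!: has_field_derivative_at_within cc_deriv)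
  moreover have "cc (2*pi) = cc 0"
    unfolding cc_def using per[of 0] per1[of 0] by simp
  ultimately have h1: "((\<lambda>b. Dd b + 2 * gg b) has_integral 0) {0..2*pi}" by simp
  have gi: "(gg has_integral integral {0..2*pi} gg) {0..2*pi}"
    using integrable_continuous_interval[OF continuous_on_subset[OF cont_gg]] by (simp add: integrable_integral)
  have "((\<lambda>b. (Dd b + 2 * gg b) - 2 * gg b) has_integral 0 - 2 * integral {0..2*pi} gg) {0..2*pi}"
    by (intro has_integral_diff h1 has_integral_mult_right gi)
  then have "(Dd has_integral - 2 * integral {0..2*pi} gg) {0..2*pi}" by simp
  then show ?thesis by (rule integral_unique)
qed

lemma exists_pos: "\<exists>z. 0 < z \<and> z < 2*pi \<and> gg z > 0"
proof -
  define n where "n b = (Re (\<gamma> b))\<^sup>2 + (Im (\<gamma> b))\<^sup>2" for b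
  have dn: "(n has_real_derivative 2 * Re (\<gamma> b) * Re (\<gamma>1 b) + 2 * Im (\<gamma> b) * Im (\<gamma>1 b)) (at b)" for b
    unfolding n_def[abs_def]
    by (rule derivative_eq_intros re_deriv im_deriv d0 refl)+ simp
  have "n 0 = n (2*pi)" unfolding n_def using per[of 0] by simp
  moreover have "continuous_on {0..2*pi} n"
    using dn by (meson DERIV_isCont continuous_at_imp_continuous_on)
  moreover have "n differentiable at x" if "0 < x" "x < 2*pi" for x
    using dn real_differentiable_def by blast
  ultimately obtain z where z: "0 < z" "z < 2*pi" "(n has_real_derivative 0) (at z)"
    using Rolle[of 0 "2*pi" n] by auto
  then have P: "Re (\<gamma> z) * Re (\<gamma>1 z) + Im (\<gamma> z) * Im (\<gamma>1 z) = 0"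
    using DERIV_unique[OF dn[of z] z(3)] by simp
  have "(Re (\<gamma> z) * Re (\<gamma>1 z) + Im (\<gamma> z) * Im (\<gamma>1 z))\<^sup>2 =
        ((Re (\<gamma> z))\<^sup>2 + (Im (\<gamma> z))\<^sup>2) * ((Re (\<gamma>1 z))\<^sup>2 + (Im (\<gamma>1 z))\<^sup>2)
         - (Re (\<gamma> z) * Im (\<gamma>1 z) - Im (\<gamma> z) * Re (\<gamma>1 z))\<^sup>2"
    by (simp add: power2_eq_square algebra_simps)
  moreover have "(Re (\<gamma> z))\<^sup>2 + (Im (\<gamma> z))\<^sup>2 > 0" using nz0[of z]
    by (simp add: sum_power2_gt_zero_iff complex_eq_iff)
  moreover have "(Re (\<gamma>1 z))\<^sup>2 + (Im (\<gamma>1 z))\<^sup>2 > 0" using nz1[of z]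
    by (simp add: sum_power2_gt_zero_iff complex_eq_iff)
  ultimately have J: "Re (\<gamma> z) * Im (\<gamma>1 z) - Im (\<gamma> z) * Re (\<gamma>1 z) \<noteq> 0"
    using P by (metis diff_zero mult_pos_pos power_zero_numeral zero_less_power2 less_irrefl)
  have "gg z > 0" unfolding gg_def using J nz0[of z] nz1[of z] by simp
  then show ?thesis using z by blast
qed

lemma int_gg_pos: "integral {0..2*pi} gg > 0"
proof (rule ccontr)
  assume "\<not> ?thesis"
  moreover have "integral {0..2*pi} gg \<ge> 0"
    using integral_nonneg[OF integrable_continuous_interval[OF continuous_on_subset[OF cont_gg]]] gg_nonneg
    by auto
  ultimately have z0: "integral {0..2*pi} gg = 0" by simp
  have gi: "gg integrable_on {0..2*pi}"
    by (rule integrable_continuous_interval[OF continuous_on_subset[OF cont_gg]]) simp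
  have "(gg has_integral 0) (cbox 0 (2*pi))"
    using integrable_integral[OF gi] z0 by simp
  obtain z where z: "0 < z" "z < 2*pi" "gg z > 0" using exists_pos by blast
  have "gg z = 0"
    by (rule has_integral_0_cbox_imp_0[OF continuous_on_subset[OF cont_gg] _ \<open>(gg has_integral 0) (cbox 0 (2*pi))\<close>])
       (use z gg_nonneg in auto)
  then show False using z by simp
qed

lemma not_hs: "\<not> hamiltonian_stationary X"
proof
  assume "hamiltonian_stationary X"
  then have "((\<lambda>t. torus_area (\<lambda>p. X p + t *\<^sub>R cJ (grad_push X hh p))) has_real_derivative 0) (at 0)"
    unfolding hamiltonian_stationary_def using smooth_hh periodic_hh by blast
  then have "integral BX (Fx 0) = 0" using DERIV_unique[OF area_deriv] by blast
  moreover have "integral BX (Fx 0) < 0"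
    unfolding int_BX int_Dd using int_gg_pos by (simp add: mult_pos_neg)
  ultimately show False by simp
qed

end

theorem mainTheorem2:
  fixes \<gamma> :: "real \<Rightarrow> complex"
  assumes "smooth_regular_simple_closed_curve \<gamma>"
      and "in_open_half_plane \<gamma>"
  shows "\<not> hamiltonian_stationary (twisted_torus \<gamma>)"
proof -
  have per: "\<And>t. \<gamma> (t + 2*pi) = \<gamma> t" and sm: "smooth_map \<gamma>"
    and vd: "\<And>t. vector_derivative \<gamma> (at t) \<noteq> 0" and nz: "\<And>t. \<gamma> t \<noteq> 0"
    using assms(1) unfolding smooth_regular_simple_closed_curve_def by auto
  obtain u where u: "\<And>t. Re (\<gamma> t * cnj u) > 0"
    using assms(2) unfolding in_open_half_plane_def by auto
  have Cg: "Cinf \<gamma>" unfolding Cinf_def using sm Ck_imp_C1D unfolding smooth_map_def by blast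
  obtain g1 where g1: "\<forall>x. (\<gamma> has_vector_derivative g1 x) (at x)" "Cinf g1"
    using Cinf_has_deriv[OF Cg] by blast
  obtain g2 where g2: "\<forall>x. (g1 has_vector_derivative g2 x) (at x)" "Cinf g2"
    using Cinf_has_deriv[OF g1(2)] by blast
  have nz1: "g1 t \<noteq> 0" for t
    using vd[of t] vector_derivative_at[OF g1(1)[rule_format, of t]] by simp
  interpret chek \<gamma> g1 g2 u
    by unfold_locales (use Cg g1 g2 per nz nz1 u in auto)
  show ?thesis by (rule not_hs)
qed


end
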